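(* Let $(X,d^\star)$ be a complete $\star$-metric space and let $A_1,A_2,\dots$ be a sequence of dense open subsets of $X$. Then $\bigcap_{n=1}^\infty A_n$ is dense in $X$.
   Context: A $t$-definer is a function $\star:[0,\infty)\times[0,\infty)\to[0,\infty)$ such that for all $a,b,c\ge 0$: $a\star b=b\star a$; $a\star(b\star c)=(a\star b)\star c$; if $a\le b$ then $a\star c\le b\star c$; $a\star 0=a$; and $\star$ is continuous in its first variable with respect to the Euclidean topology. Given a nonempty set $X$ and a $t$-definer $\star$, a $\star$-metric on $X$ is a function $d^\star:X\times X\to[0,\infty)$ such that for all $x,y,z\in X$: $d^\star(x,y)=0$ iff $x=y$; $d^\star(x,y)=d^\star(y,x)$; and $d^\star(x,y)\le d^\star(x,z)\star d^\star(z,y)$. Topological notions refer to the topology consisting of all $U\subseteq X$ such that for each $a\in U$ there is $r>0$ with $\{x: d^\star(a,x)<r\}\subseteq U$. A sequence $\{x_n\}$ is Cauchy if for every $\epsilon>0$ there is $k$ with $d^\star(x_n,x_m)<\epsilon$ for all $m,n\ge k$; it converges to $x$ if for every $\epsilon>0$ there is $k$ with $d^\star(x,x_n)<\epsilon$ for $n\ge k$. $(X,d^\star)$ is complete if every Cauchy sequence converges to a point of $X$. *)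

theory Defs
  imports "HOL-Analysis.Analysis"
begin

text \<open>A t-definer: a binary operation on [0,\<infinity>) (represented as a real function,
  constrained only on nonnegative arguments).\<close>
definition t_definer :: "(real \<Rightarrow> real \<Rightarrow> real) \<Rightarrow> bool" where
  "t_definer star \<longleftrightarrow>
     (\<forall>a\<ge>0. \<forall>b\<ge>0. star a b \<ge> 0) \<and>
     (\<forall>a\<ge>0. \<forall>b\<ge>0. star a b = star b a) \<and>
     (\<forall>a\<ge>0. \<forall>b\<ge>0. \<forall>c\<ge>0. star a (star b c) = star (star a b) c) \<and>
     (\<forall>a\<ge>0. \<forall>b\<ge>0. \<forall>c\<ge>0. a \<le> b \<longrightarrow> star a c \<le> star b c) \<and>
     (\<forall>a\<ge>0. star a 0 = a) \<and>
     (\<forall>b\<ge>0. continuous_on {0..} (\<lambda>a. star a b))"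

definition star_metric :: "(real \<Rightarrow> real \<Rightarrow> real) \<Rightarrow> 'a set \<Rightarrow> ('a \<Rightarrow> 'a \<Rightarrow> real) \<Rightarrow> bool" where
  "star_metric star X d \<longleftrightarrow>
     (\<forall>x\<in>X. \<forall>y\<in>X. d x y \<ge> 0) \<and>
     (\<forall>x\<in>X. \<forall>y\<in>X. d x y = 0 \<longleftrightarrow> x = y) \<and>
     (\<forall>x\<in>X. \<forall>y\<in>X. d x y = d y x) \<and>
     (\<forall>x\<in>X. \<forall>y\<in>X. \<forall>z\<in>X. d x y \<le> star (d x z) (d z y))"

definition star_topology :: "'a set \<Rightarrow> ('a \<Rightarrow> 'a \<Rightarrow> real) \<Rightarrow> 'a topology" where
  "star_topology X d = topology (\<lambda>U. U \<subseteq> X \<and>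
     (\<forall>a\<in>U. \<exists>r>0. {x\<in>X. d a x < r} \<subseteq> U))"

definition star_Cauchy :: "'a set \<Rightarrow> ('a \<Rightarrow> 'a \<Rightarrow> real) \<Rightarrow> (nat \<Rightarrow> 'a) \<Rightarrow> bool" where
  "star_Cauchy X d x \<longleftrightarrow> (\<forall>\<epsilon>>0. \<exists>k. \<forall>m n. m \<ge> k \<and> n \<ge> k \<longrightarrow> d (x n) (x m) < \<epsilon>)"

definition star_converges :: "('a \<Rightarrow> 'a \<Rightarrow> real) \<Rightarrow> (nat \<Rightarrow> 'a) \<Rightarrow> 'a \<Rightarrow> bool" where
  "star_converges d x l \<longleftrightarrow> (\<forall>\<epsilon>>0. \<exists>k. \<forall>n\<ge>k. d l (x n) < \<epsilon>)"

definition star_complete :: "'a set \<Rightarrow> ('a \<Rightarrow> 'a \<Rightarrow> real) \<Rightarrow> bool" where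
  "star_complete X d \<longleftrightarrow>
     (\<forall>x. range x \<subseteq> X \<and> star_Cauchy X d x \<longrightarrow> (\<exists>l\<in>X. star_converges d x l))"

end

theory Submission
  imports Defs
begin

lemma istop_star: fixes d :: "'a \<Rightarrow> 'a \<Rightarrow> real"
  shows "istopology (\<lambda>U. U \<subseteq> X \<and> (\<forall>a\<in>U. \<exists>r>0. {x\<in>X. d a x < r} \<subseteq> U))"
  unfolding istopology_def
proof (intro conjI)
  show "\<forall>S T. S \<subseteq> X \<and> (\<forall>a\<in>S. \<exists>r>0. {x\<in>X. d a x < r} \<subseteq> S) \<longrightarrow>
     T \<subseteq> X \<and> (\<forall>a\<in>T. \<exists>r>0. {x\<in>X. d a x < r} \<subseteq> T) \<longrightarrow>
     S \<inter> T \<subseteq> X \<and> (\<forall>a\<in>S \<inter> T. \<exists>r>0. {x\<in>X. d a x < r} \<subseteq> S \<inter> T)"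
  proof (intro allI impI conjI ballI)
    fix S T a
    assume S: "S \<subseteq> X \<and> (\<forall>a\<in>S. \<exists>r>0. {x\<in>X. d a x < r} \<subseteq> S)"
      and T: "T \<subseteq> X \<and> (\<forall>a\<in>T. \<exists>r>0. {x\<in>X. d a x < r} \<subseteq> T)"
    show "S \<inter> T \<subseteq> X" using S by auto
    assume "a \<in> S \<inter> T"
    then obtain r1 r2 where "r1 > 0" "{x\<in>X. d a x < r1} \<subseteq> S" "r2 > 0" "{x\<in>X. d a x < r2} \<subseteq> T"
      using S T by blast
    then show "\<exists>r>0. {x\<in>X. d a x < r} \<subseteq> S \<inter> T"
      by (intro exI[of _ "min r1 r2"]) auto
  qed
  show "\<forall>K. (\<forall>S\<in>K. S \<subseteq> X \<and> (\<forall>a\<in>S. \<exists>r>0. {x\<in>X. d a x < r} \<subseteq> S)) \<longrightarrow>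
     \<Union>K \<subseteq> X \<and> (\<forall>a\<in>\<Union>K. \<exists>r>0. {x\<in>X. d a x < r} \<subseteq> \<Union>K)"
  proof (intro allI impI conjI ballI)
    fix K assume K: "\<forall>S\<in>K. S \<subseteq> X \<and> (\<forall>a\<in>S. \<exists>r>0. {x\<in>X. d a x < r} \<subseteq> S)"
    show "\<Union>K \<subseteq> X" using K by auto
    fix a assume "a \<in> \<Union>K"
    then obtain S where "S \<in> K" "a \<in> S" by auto
    then obtain r where "r > 0" "{x\<in>X. d a x < r} \<subseteq> S" using K by blast
    then show "\<exists>r>0. {x\<in>X. d a x < r} \<subseteq> \<Union>K" using \<open>S \<in> K\<close> by blast
  qed
qed

lemma openin_star: fixes d :: "'a \<Rightarrow> 'a \<Rightarrow> real" shows "openin (star_topology X d) U \<longleftrightarrow>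
   U \<subseteq> X \<and> (\<forall>a\<in>U. \<exists>r>0. {x\<in>X. d a x < r} \<subseteq> U)"
  unfolding star_topology_def by (simp add: topology_inverse'[OF istop_star])

lemma topspace_star: "topspace (star_topology X d) = X"
proof -
  have "openin (star_topology X d) X" unfolding openin_star by (auto intro: exI[of _ 1])
  then have 1: "X \<subseteq> topspace (star_topology X d)" by (rule openin_subset)
  have "openin (star_topology X d) (topspace (star_topology X d))" by (rule openin_topspace)
  then have 2: "topspace (star_topology X d) \<subseteq> X" unfolding openin_star by blast
  show ?thesis using 1 2 by (rule subset_antisym[rotated])
qed

lemma star_cont0:
  assumes "t_definer star" "a \<ge> 0" "a < r"
  shows "\<exists>s>0. \<forall>t. 0 \<le> t \<and> t < s \<longrightarrow> star a t < r"
proof -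
  have c: "continuous_on {0..} (\<lambda>t. star t a)" using assms unfolding t_definer_def by auto
  have z: "star 0 a = a" using assms unfolding t_definer_def by auto
  obtain s where s: "s > 0" "\<forall>t\<in>{0..}. dist t 0 < s \<longrightarrow> dist (star t a) (star 0 a) < r - a"
  proof -
    have "\<forall>x\<in>{0::real..}. \<forall>e>0. \<exists>d>0. \<forall>x'\<in>{0..}. dist x' x < d \<longrightarrow> dist (star x' a) (star x a) < e"
      using c unfolding continuous_on_iff .
    then have "\<forall>e>0. \<exists>d>0. \<forall>x'\<in>{0..}. dist x' 0 < d \<longrightarrow> dist (star x' a) (star 0 a) < e"
      by (rule bspec) simp
    moreover have "r - a > 0" using assms by simp
    ultimately have "\<exists>d>0. \<forall>x'\<in>{0..}. dist x' 0 < d \<longrightarrow> dist (star x' a) (star 0 a) < r - a"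
      by blast
    then show ?thesis using that by blast
  qed
  show ?thesis
  proof (intro exI[of _ s] conjI allI impI)
    fix t assume t: "0 \<le> t \<and> t < s"
    then have "dist (star t a) a < r - a" using s z by (auto simp: dist_real_def)
    moreover have "star a t = star t a" using assms t unfolding t_definer_def by auto
    ultimately show "star a t < r" by (auto simp: dist_real_def)
  qed (use s in auto)
qed

lemma star_mono2:
  assumes "t_definer star" "0 \<le> a" "0 \<le> b" "b \<le> c"
  shows "star a b \<le> star a c"
proof -
  have "star b a \<le> star c a" using assms unfolding t_definer_def by auto
  moreover have "star a b = star b a" "star a c = star c a"
    using assms unfolding t_definer_def by auto
  ultimately show ?thesis by simp
qed

lemma star_mono:
  assumes "t_definer star" "0 \<le> a" "a \<le> a'" "0 \<le> b" "b \<le> b'"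
  shows "star a b \<le> star a' b'"
proof -
  have "star a b \<le> star a' b" using assms unfolding t_definer_def by auto
  also have "\<dots> \<le> star a' b'" using star_mono2[OF assms(1)] assms by auto
  finally show ?thesis .
qed

lemma star_ge:
  assumes "t_definer star" "0 \<le> a" "0 \<le> b"
  shows "a \<le> star a b"
proof -
  have "star a 0 = a" using assms unfolding t_definer_def by auto
  then show ?thesis using star_mono2[OF assms(1,2), of 0 b] assms by auto
qed

lemma star_small:
  assumes "t_definer star" "e > 0"
  shows "\<exists>r>0. star r r < e"
proof -
  obtain s where s: "s > 0" "\<forall>t. 0 \<le> t \<and> t < s \<longrightarrow> star (e/2) t < e"
    using star_cont0[OF assms(1), of "e/2" e] assms by auto
  define r where "r = min (e/2) (s/2)"
  have "r > 0" using s assms by (auto simp: r_def)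
  have "star r r \<le> star (e/2) r" using assms \<open>r > 0\<close> unfolding t_definer_def r_def by auto
  also have "\<dots> < e" using s \<open>r > 0\<close> by (auto simp: r_def)
  finally show ?thesis using \<open>r > 0\<close> by auto
qed

lemma ball_open:
  assumes "t_definer star" "star_metric star X d" "x \<in> X"
  shows "openin (star_topology X d) {y\<in>X. d x y < r}"
  unfolding openin_star
proof (intro conjI ballI)
  show "{y\<in>X. d x y < r} \<subseteq> X" by auto
  fix y assume y: "y \<in> {y\<in>X. d x y < r}"
  show "\<exists>s>0. {z\<in>X. d y z < s} \<subseteq> {y\<in>X. d x y < r}"
  proof -
    note True = assms(3)
    have "d x y \<ge> 0" using assms y True unfolding star_metric_def by auto
    then obtain s where s: "s > 0" "\<forall>t. 0 \<le> t \<and> t < s \<longrightarrow> star (d x y) t < r"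
      using star_cont0[OF assms(1), of "d x y" r] y by auto
    have "{z\<in>X. d y z < s} \<subseteq> {y\<in>X. d x y < r}"
    proof safe
      fix z assume z: "z \<in> X" "d y z < s"
      have "d x z \<le> star (d x y) (d y z)" using assms(2) True y z unfolding star_metric_def by auto
      also have "\<dots> < r" using s z assms(2) y unfolding star_metric_def by auto
      finally show "d x z < r" .
    qed
    then show ?thesis using s by auto
  qed
qed

lemma step:
  assumes "t_definer star" "star_metric star X d"
    and "openin (star_topology X d) (A n)"
    and "star_topology X d closure_of A n = X"
    and "openin (star_topology X d) V" "V \<noteq> {}"
  shows "\<exists>x r. x \<in> X \<and> r > 0 \<and> star r r < 1 / Suc n \<and>
     {y\<in>X. d x y \<le> star r r} \<subseteq> V \<inter> A n"
proof -
  obtain v where v: "v \<in> V" using assms(6) by auto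
  have "V \<subseteq> X" using assms(5) unfolding openin_star by blast
  then have vX: "v \<in> X" using v by blast
  then have "v \<in> star_topology X d closure_of A n" using assms(4) by simp
  then have "\<forall>T. v \<in> T \<and> openin (star_topology X d) T \<longrightarrow> (\<exists>y. y \<in> A n \<and> y \<in> T)"
    unfolding in_closure_of by blast
  then obtain x where x: "x \<in> A n" "x \<in> V" using v assms(5) by blast
  have "openin (star_topology X d) (V \<inter> A n)" using assms(3,5) by (rule openin_Int[rotated])
  then have "\<forall>a\<in>V \<inter> A n. \<exists>r>0. {y\<in>X. d a y < r} \<subseteq> V \<inter> A n" "V \<inter> A n \<subseteq> X"
    unfolding openin_star by blast+
  then obtain e where e: "e > 0" "{y\<in>X. d x y < e} \<subseteq> V \<inter> A n" and xX: "x \<in> X"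
    using x by blast
  have "min e (1 / Suc n) > 0" using e by simp
  then obtain r where r: "r > 0" "star r r < min e (1 / Suc n)"
    using star_small[OF assms(1)] by blast
  have "{y\<in>X. d x y \<le> star r r} \<subseteq> {y\<in>X. d x y < e}" using r by auto
  then have "{y\<in>X. d x y \<le> star r r} \<subseteq> V \<inter> A n" using e(2) by (rule order_trans)
  moreover have "star r r < 1 / Suc n" using r by simp
  ultimately show ?thesis using xX r(1) by blast
qed

theorem theorem4p14:
  fixes star :: "real \<Rightarrow> real \<Rightarrow> real" and X :: "'a set"
    and d :: "'a \<Rightarrow> 'a \<Rightarrow> real" and A :: "nat \<Rightarrow> 'a set"
  assumes "X \<noteq> {}"
    and "t_definer star"
    and "star_metric star X d"
    and "star_complete X d"
    and "\<And>n. openin (star_topology X d) (A n)"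
    and "\<And>n. (star_topology X d) closure_of (A n) = X"
  shows "(star_topology X d) closure_of (\<Inter>n. A n) = X"
proof (rule subset_antisym)
  show "star_topology X d closure_of (\<Inter>n. A n) \<subseteq> X"
    using closure_of_subset_topspace topspace_star by metis
next
  have tdef: "t_definer star" and sm: "star_metric star X d" using assms by auto
  have dpos: "\<And>x y. x \<in> X \<Longrightarrow> y \<in> X \<Longrightarrow> d x y \<ge> 0"
    and dsym: "\<And>x y. x \<in> X \<Longrightarrow> y \<in> X \<Longrightarrow> d x y = d y x"
    and d0: "\<And>x. x \<in> X \<Longrightarrow> d x x = 0"
    and tri: "\<And>x y z. x \<in> X \<Longrightarrow> y \<in> X \<Longrightarrow> z \<in> X \<Longrightarrow> d x y \<le> star (d x z) (d z y)"
    using sm unfolding star_metric_def by auto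
  define Q where "Q = (\<lambda>V n (p :: 'a \<times> real). fst p \<in> X \<and> snd p > 0 \<and>
       star (snd p) (snd p) < 1 / Suc n \<and>
       {y\<in>X. d (fst p) y \<le> star (snd p) (snd p)} \<subseteq> V \<inter> A n)"
  have Qex: "\<exists>p. Q V n p" if "openin (star_topology X d) V" "V \<noteq> {}" for V n
    using step[OF tdef sm assms(5) assms(6) that] unfolding Q_def by auto
  define B where "B = (\<lambda>p :: 'a \<times> real. {y\<in>X. d (fst p) y < snd p})"
  have Bopen: "openin (star_topology X d) (B p)" if "fst p \<in> X" for p
    unfolding B_def using ball_open[OF tdef sm that] by blast
  have Bne: "B p \<noteq> {}" if "fst p \<in> X" "snd p > 0" for p
    using that d0 unfolding B_def by auto
  show "X \<subseteq> star_topology X d closure_of (\<Inter>n. A n)"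
  proof
    fix x0 assume x0: "x0 \<in> X"
    show "x0 \<in> star_topology X d closure_of (\<Inter>n. A n)"
      unfolding in_closure_of topspace_star
    proof (intro conjI allI impI)
      show "x0 \<in> X" by fact
      fix U assume U: "x0 \<in> U \<and> openin (star_topology X d) U"
      define p where "p = rec_nat (SOME p. Q U 0 p) (\<lambda>n q. SOME p. Q (B q) (Suc n) p)"
      have p0: "p 0 = (SOME p. Q U 0 p)" and pS: "\<And>n. p (Suc n) = (SOME p'. Q (B (p n)) (Suc n) p')"
        unfolding p_def by auto
      have e0: "\<exists>p. Q U 0 p" using Qex[of U 0] U by auto
      have Q0: "Q U 0 (p 0)" unfolding p0 using someI_ex[OF e0] .
      have Qn: "fst (p n) \<in> X \<and> snd (p n) > 0 \<and>
          star (snd (p n)) (snd (p n)) < 1 / Suc n \<and>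
          {y\<in>X. d (fst (p n)) y \<le> star (snd (p n)) (snd (p n))} \<subseteq> A n" for n
      proof (induction n)
        case 0 then show ?case using Q0 unfolding Q_def by auto
      next
        case (Suc n)
        have e: "\<exists>p'. Q (B (p n)) (Suc n) p'"
          using Qex[OF Bopen Bne] Suc by auto
        have "Q (B (p n)) (Suc n) (p (Suc n))" unfolding pS
          using someI_ex[OF e] .
        then show ?case unfolding Q_def by auto
      qed
      have QS: "Q (B (p n)) (Suc n) (p (Suc n))" for n
      proof -
        have e: "\<exists>p'. Q (B (p n)) (Suc n) p'"
          using Qex[OF Bopen Bne] Qn[of n] by auto
        show ?thesis unfolding pS using someI_ex[OF e] .
      qed
      define x where "x = (\<lambda>n. fst (p n))"
      define r where "r = (\<lambda>n. snd (p n))"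
      have xX: "x n \<in> X" and rpos: "r n > 0" and rsmall: "star (r n) (r n) < 1 / Suc n"
        and cA: "{y\<in>X. d (x n) y \<le> star (r n) (r n)} \<subseteq> A n" for n
        using Qn unfolding x_def r_def by auto
      have cU: "{y\<in>X. d (x 0) y \<le> star (r 0) (r 0)} \<subseteq> U"
        using Q0 unfolding Q_def x_def r_def by auto
      have cS: "{y\<in>X. d (x (Suc n)) y \<le> star (r (Suc n)) (r (Suc n))} \<subseteq> B (p n)" for n
        using QS unfolding Q_def x_def r_def by auto
      have ball_le: "{y\<in>X. d (x n) y < r n} \<subseteq> {y\<in>X. d (x n) y \<le> star (r n) (r n)}" for n
      proof safe
        fix y assume "y \<in> X" "d (x n) y < r n"
        moreover have "r n \<le> star (r n) (r n)" using star_ge[OF tdef] rpos[of n] by auto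
        ultimately show "d (x n) y \<le> star (r n) (r n)" by auto
      qed
      have nest: "{y\<in>X. d (x m) y < r m} \<subseteq> {y\<in>X. d (x n) y < r n}" if "n \<le> m" for n m
        using that
      proof (induction m rule: dec_induct)
        case base then show ?case by simp
      next
        case (step m)
        have "{y\<in>X. d (x (Suc m)) y < r (Suc m)} \<subseteq> B (p m)" using ball_le cS by blast
        then show ?case using step unfolding B_def x_def r_def by auto
      qed
      have inball: "d (x n) (x m) < r n" if "n \<le> m" for n m
        using nest[OF that] xX[of m] d0[of "x m"] rpos[of m] by auto
      have cauchy: "star_Cauchy X d x"
        unfolding star_Cauchy_def
      proof (intro allI impI)
        fix e :: real assume e: "e > 0"
        obtain k where k: "1 / Suc k < e"
          using e by (metis nat_approx_posE of_nat_Suc)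
        show "\<exists>k. \<forall>m n. k \<le> m \<and> k \<le> n \<longrightarrow> d (x n) (x m) < e"
        proof (intro exI[of _ k] allI impI)
          fix m n assume mn: "k \<le> m \<and> k \<le> n"
          have "d (x n) (x m) \<le> star (d (x n) (x k)) (d (x k) (x m))" using tri xX by auto
          also have "\<dots> \<le> star (r k) (r k)"
          proof (rule star_mono[OF tdef])
            show "0 \<le> d (x n) (x k)" "0 \<le> d (x k) (x m)" using dpos xX by auto
            show "d (x k) (x m) \<le> r k" using inball[of k m] mn by auto
            have "d (x n) (x k) = d (x k) (x n)" using dsym xX by auto
            then show "d (x n) (x k) \<le> r k" using inball[of k n] mn by auto
          qed
          also have "\<dots> < e" using rsmall[of k] k by auto
          finally show "d (x n) (x m) < e" .
        qed
      qed
      obtain l where l: "l \<in> X" "star_converges d x l"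
        using assms(4) cauchy xX unfolding star_complete_def by blast
      have lin: "d (x n) l \<le> star (r n) (r n)" for n
      proof -
        obtain k where k: "\<forall>m\<ge>k. d l (x m) < r n" using l(2) rpos[of n] unfolding star_converges_def by blast
        define m where "m = max n k"
        have "d (x n) l \<le> star (d (x n) (x m)) (d (x m) l)" using tri xX l by auto
        also have "\<dots> \<le> star (r n) (r n)"
        proof (rule star_mono[OF tdef])
          show "0 \<le> d (x n) (x m)" "0 \<le> d (x m) l" using dpos xX l(1) by auto
          show "d (x n) (x m) \<le> r n" using inball[of n m] unfolding m_def by auto
          have "d (x m) l = d l (x m)" using dsym xX l(1) by auto
          moreover have "d l (x m) < r n" using k unfolding m_def by simp
          ultimately show "d (x m) l \<le> r n" by simp
        qed
        finally show ?thesis .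
      qed
      have "l \<in> A n" for n using cA[of n] lin[of n] l(1) by blast
      then have "l \<in> (\<Inter>n. A n)" by blast
      moreover have "l \<in> U" using cU lin[of 0] l(1) by blast
      ultimately show "\<exists>y. y \<in> (\<Inter>n. A n) \<and> y \<in> U" by blast
    qed
  qed
qed

end
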